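(* Let $F\subseteq P_{3,4}$ be a face and $J\subseteq J_F$ a linear subspace of codimension $1$ in $J_F$ with basis $q_1,\dots,q_k$. If there exists $h\in J_F\setminus J$ such that $q_1^2+\dots+q_k^2-\epsilon h^2$ is not nonnegative on $\mathbb P^2(\mathbb R)$ for every $\epsilon>0$, then there is a face $G\subsetneq F$ with $J=J_G$.
   Context: $H_k\subseteq\mathbb R[x,y,z]$: real ternary forms of degree $k$; $P_{3,4}=\{f\in H_4: f\ge0\text{ on }\mathbb P^2(\mathbb R)\}$. A face of $P_{3,4}$ is a convex subcone $F$ such that $a,b\in P_{3,4}$, $a+b\in F$ imply $a,b\in F$. For a face $F$, $J_F=\{q\in H_2:q^2\in F\}$ (a linear subspace). *)

theory Defs
  imports Complex_Main
begin

text \<open>Real ternary forms are represented by their polynomial functions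
  \<open>\<real>\<^sup>3 \<rightarrow> \<real>\<close> (faithful, as \<open>\<real>\<close> is infinite).\<close>
type_synonym form = "real \<Rightarrow> real \<Rightarrow> real \<Rightarrow> real"

definition H :: "nat \<Rightarrow> form set" where
  "H k = {f. \<exists>c :: nat \<Rightarrow> nat \<Rightarrow> real. \<forall>x y z.
      f x y z = (\<Sum>a\<le>k. \<Sum>b\<le>k - a. c a b * x ^ a * y ^ b * z ^ (k - a - b))}"

definition P34 :: "form set" where
  "P34 = {f \<in> H 4. \<forall>x y z. f x y z \<ge> 0}"

definition is_face :: "form set \<Rightarrow> bool" where
  "is_face F \<longleftrightarrow> F \<subseteq> P34 \<and> F \<noteq> {}
     \<and> (\<forall>a\<in>F. \<forall>b\<in>F. (\<lambda>x y z. a x y z + b x y z) \<in> F)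
     \<and> (\<forall>t::real. t \<ge> 0 \<longrightarrow> (\<forall>a\<in>F. (\<lambda>x y z. t * a x y z) \<in> F))
     \<and> (\<forall>a\<in>P34. \<forall>b\<in>P34. (\<lambda>x y z. a x y z + b x y z) \<in> F \<longrightarrow> a \<in> F \<and> b \<in> F)"

definition JF :: "form set \<Rightarrow> form set" where
  "JF F = {q \<in> H 2. (\<lambda>x y z. (q x y z)^2) \<in> F}"

definition span_list :: "form list \<Rightarrow> form set" where
  "span_list qs = {(\<lambda>x y z. \<Sum>i<length qs. c i * (qs ! i) x y z) | c :: nat \<Rightarrow> real. True}"

definition lin_indep_list :: "form list \<Rightarrow> bool" where
  "lin_indep_list qs \<longleftrightarrow> (\<forall>c :: nat \<Rightarrow> real.
     (\<forall>x y z. (\<Sum>i<length qs. c i * (qs ! i) x y z) = 0) \<longrightarrow> (\<forall>i<length qs. c i = 0))"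

definition is_basis_of :: "form list \<Rightarrow> form set \<Rightarrow> bool" where
  "is_basis_of qs J \<longleftrightarrow> lin_indep_list qs \<and> span_list qs = J"

definition codim1_in :: "form set \<Rightarrow> form set \<Rightarrow> bool" where
  "codim1_in J V \<longleftrightarrow> J \<subseteq> V
     \<and> (\<exists>g\<in>V. g \<notin> J \<and> V = {(\<lambda>x y z. j x y z + t * g x y z) | j t. j \<in> J})"

end

theory Submission
  imports Defs "HOL-Analysis.Convex"
begin

lemma H_lin:
  assumes "a \<in> H k" "b \<in> H k"
  shows "(\<lambda>x y z. s * a x y z + t * b x y z) \<in> H k"
proof -
  obtain ca where ca: "\<forall>x y z. a x y z = (\<Sum>i\<le>k. \<Sum>j\<le>k - i. ca i j * x ^ i * y ^ j * z ^ (k - i - j))"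
    using assms(1) unfolding H_def by blast
  obtain cb where cb: "\<forall>x y z. b x y z = (\<Sum>i\<le>k. \<Sum>j\<le>k - i. cb i j * x ^ i * y ^ j * z ^ (k - i - j))"
    using assms(2) unfolding H_def by blast
  show ?thesis unfolding H_def
  proof (intro CollectI exI allI)
    fix x y z :: real
    show "s * a x y z + t * b x y z = (\<Sum>i\<le>k. \<Sum>j\<le>k - i. (s * ca i j + t * cb i j) * x ^ i * y ^ j * z ^ (k - i - j))"
      by (simp add: ca cb sum_distrib_left sum.distrib[symmetric] algebra_simps)
  qed
qed

lemma H_diff:
  assumes "a \<in> H k" "b \<in> H k"
  shows "(\<lambda>x y z. s * a x y z - b x y z) \<in> H k"
  using H_lin[OF assms, of s "-1"] by simp

lemma P34_diff:
  assumes "a \<in> H 4" "b \<in> H 4" "\<forall>x y z. s * a x y z - b x y z \<ge> 0"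
  shows "(\<lambda>x y z. s * a x y z - b x y z) \<in> P34"
proof -
  have "(\<lambda>x y z. s * a x y z - b x y z) \<in> H 4" by (rule H_diff[OF assms(1,2)])
  then show ?thesis unfolding P34_def using assms(3) by simp
qed

lemma face_P: "is_face F \<Longrightarrow> F \<subseteq> P34"
  unfolding is_face_def by (erule conjunct1)
lemma face_ne: "is_face F \<Longrightarrow> F \<noteq> {}"
  unfolding is_face_def by (drule conjunct2, erule conjunct1)
lemma face_add: "is_face F \<Longrightarrow> \<forall>a\<in>F. \<forall>b\<in>F. (\<lambda>x y z. a x y z + b x y z) \<in> F"
  unfolding is_face_def by (drule conjunct2, drule conjunct2, erule conjunct1)
lemma face_scale: "is_face F \<Longrightarrow> \<forall>t::real. t \<ge> 0 \<longrightarrow> (\<forall>a\<in>F. (\<lambda>x y z. t * a x y z) \<in> F)"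
  unfolding is_face_def by (drule conjunct2, drule conjunct2, drule conjunct2, erule conjunct1)
lemma face_ext: "is_face F \<Longrightarrow> \<forall>a\<in>P34. \<forall>b\<in>P34. (\<lambda>x y z. a x y z + b x y z) \<in> F \<longrightarrow> a \<in> F \<and> b \<in> F"
  unfolding is_face_def by (drule conjunct2, drule conjunct2, drule conjunct2, erule conjunct2)

lemma face_zero:
  assumes "is_face F" shows "(\<lambda>x y z. 0) \<in> F"
proof -
  obtain a where a: "a \<in> F" using face_ne[OF assms] by blast
  have "(\<lambda>x y z. 0 * a x y z) \<in> F" using face_scale[OF assms, rule_format, of 0 a] a by simp
  then show ?thesis by simp
qed

lemma face_sum:
  fixes n :: nat
  assumes "is_face F" "\<forall>i<n. (\<lambda>x y z. g i x y z) \<in> F"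
  shows "(\<lambda>x y z. \<Sum>i<n. g i x y z) \<in> F"
  using assms(2)
proof (induction n)
  case 0
  then show ?case using face_zero[OF assms(1)] by simp
next
  case (Suc n)
  then have A: "(\<lambda>x y z. \<Sum>i<n. g i x y z) \<in> F" and B: "(\<lambda>x y z. g n x y z) \<in> F" by auto
  have "(\<lambda>x y z. (\<Sum>i<n. g i x y z) + g n x y z) \<in> F"
    using face_add[OF assms(1)] A B by fastforce
  then show ?case by simp
qed

lemma sq3: "((a::real) + b + c)^2 \<le> 3 * (a^2 + b^2 + c^2)"
proof -
  have "0 \<le> (a-b)^2 + (b-c)^2 + (a-c)^2" by simp
  then show ?thesis by (simp add: power2_eq_square algebra_simps)
qed

theorem mainTheorem14:
  fixes F J :: "form set" and qs :: "form list"
  assumes "is_face F"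
    and "codim1_in J (JF F)"
    and "is_basis_of qs J"
    and "\<exists>h \<in> JF F - J. \<forall>\<epsilon>::real. \<epsilon> > 0 \<longrightarrow>
           \<not> (\<forall>x y z. (\<Sum>i<length qs. ((qs ! i) x y z)^2) - \<epsilon> * (h x y z)^2 \<ge> 0)"
  shows "\<exists>G. is_face G \<and> G \<subset> F \<and> J = JF G"
proof -
  have face: "is_face F" by fact
  have FP: "F \<subseteq> P34" using face_P[OF face] .
  obtain h where hF: "h \<in> JF F" and hprop: "\<forall>\<epsilon>::real. \<epsilon> > 0 \<longrightarrow>
           \<not> (\<forall>x y z. (\<Sum>i<length qs. ((qs ! i) x y z)^2) - \<epsilon> * (h x y z)^2 \<ge> 0)"
    using assms(4) by blast
  define f where "f = (\<lambda>x y z. \<Sum>i<length qs. ((qs ! i) x y z)^2)"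
  have JJ: "J \<subseteq> JF F" using assms(2) unfolding codim1_in_def by blast
  have spanJ: "span_list qs = J" using assms(3) unfolding is_basis_of_def by blast
  have qsJ: "qs ! i \<in> J" if "i < length qs" for i
  proof -
    have "(\<lambda>x y z. \<Sum>j<length qs. (if j = i then 1 else 0) * (qs ! j) x y z) \<in> span_list qs"
      unfolding span_list_def by (rule CollectI, intro exI[of _ "\<lambda>j. if j = i then 1 else 0"] conjI refl TrueI)
    moreover have "(\<lambda>x y z. \<Sum>j<length qs. (if j = i then 1 else 0) * (qs ! j) x y z) = qs ! i"
    proof (intro ext)
      fix x y z
      have "(\<Sum>j<length qs. (if j = i then 1 else 0) * (qs ! j) x y z) = (\<Sum>j<length qs. if j = i then (qs ! j) x y z else 0)"
        by (rule sum.cong) auto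
      also have "\<dots> = (qs ! i) x y z" using that by simp
      finally show "(\<Sum>j<length qs. (if j = i then 1 else 0) * (qs ! j) x y z) = (qs ! i) x y z" .
    qed
    ultimately show ?thesis using spanJ by simp
  qed
  have fF: "f \<in> F" unfolding f_def
  proof (rule face_sum[OF face], intro allI impI)
    fix i assume "i < length qs"
    then have "qs ! i \<in> JF F" using qsJ JJ by blast
    then show "(\<lambda>x y z. ((qs ! i) x y z)^2) \<in> F" unfolding JF_def by blast
  qed
  have fP: "f \<in> P34" using fF FP by blast
  have fH: "f \<in> H 4" using fP by (simp add: P34_def)
  have fnn: "\<forall>x y z. f x y z \<ge> 0" using fP by (simp add: P34_def)
  have nobound: "\<not> (\<forall>x y z. (h x y z)^2 \<le> L * f x y z)" if "L \<ge> 0" for L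
  proof
    assume b: "\<forall>x y z. (h x y z)^2 \<le> L * f x y z"
    have "\<forall>x y z. f x y z - (1/(L+1)) * (h x y z)^2 \<ge> 0"
    proof (intro allI)
      fix x y z
      have "(h x y z)^2 \<le> (L+1) * f x y z" using b fnn[rule_format, of x y z] that
        by (smt (verit) mult_right_mono)
      then have "(1/(L+1)) * (h x y z)^2 \<le> f x y z" using that
        by (simp add: field_simps)
      then show "f x y z - (1/(L+1)) * (h x y z)^2 \<ge> 0" by simp
    qed
    then show False using hprop that unfolding f_def
      by (metis divide_pos_pos add_nonneg_pos zero_less_one)
  qed
  have bound: "\<exists>L\<ge>0. \<forall>x y z. (q x y z)^2 \<le> L * f x y z" if qJ: "q \<in> J" for q
  proof -
    obtain c where qc: "q = (\<lambda>x y z. \<Sum>i<length qs. c i * (qs ! i) x y z)"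
      using qJ spanJ unfolding span_list_def by blast
    show ?thesis
    proof (intro exI[of _ "\<Sum>i<length qs. (c i)^2"] conjI allI)
      show "0 \<le> (\<Sum>i<length qs. (c i)^2)" by (simp add: sum_nonneg)
      fix x y z
      show "(q x y z)^2 \<le> (\<Sum>i<length qs. (c i)^2) * f x y z"
        unfolding qc f_def by (rule Cauchy_Schwarz_ineq_sum)
    qed
  qed
  define G where "G = {g \<in> P34. \<exists>L\<ge>0. (\<lambda>x y z. L * f x y z - g x y z) \<in> P34}"
  have GP: "G \<subseteq> P34" unfolding G_def by blast
  have PH: "g \<in> P34 \<Longrightarrow> g \<in> H 4" for g unfolding P34_def by blast
  have Pnn: "g \<in> P34 \<Longrightarrow> g x y z \<ge> 0" for g x y z unfolding P34_def by blast
  have Gext: "a \<in> G \<and> b \<in> G" if a: "a \<in> P34" and b: "b \<in> P34" and ab: "(\<lambda>x y z. a x y z + b x y z) \<in> G" for a b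
  proof -
    obtain L where L: "L \<ge> 0" "(\<lambda>x y z. L * f x y z - (a x y z + b x y z)) \<in> P34"
      using ab unfolding G_def by blast
    have "(\<lambda>x y z. L * f x y z - a x y z) \<in> P34"
      apply (rule P34_diff[OF fH PH[OF a]])
      using Pnn[OF L(2)] Pnn[OF b] by (smt (verit))
    moreover have "(\<lambda>x y z. L * f x y z - b x y z) \<in> P34"
      apply (rule P34_diff[OF fH PH[OF b]])
      using Pnn[OF L(2)] Pnn[OF a] by (smt (verit))
    ultimately show ?thesis unfolding G_def using a b L by blast
  qed
  have Gface: "is_face G"
    unfolding is_face_def
  proof (intro conjI ballI allI impI)
    show "G \<subseteq> P34" by fact
    have "(\<lambda>x y z. 1 * f x y z - f x y z) \<in> P34"
      by (rule P34_diff[OF fH fH]) simp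
    then have "f \<in> G" unfolding G_def using fF FP by (auto intro!: exI[of _ 1])
    then show "G \<noteq> {}" by blast
  next
    fix a b assume a: "a \<in> G" and b: "b \<in> G"
    obtain La where La: "La \<ge> 0" "(\<lambda>x y z. La * f x y z - a x y z) \<in> P34" "a \<in> P34"
      using a unfolding G_def by blast
    obtain Lb where Lb: "Lb \<ge> 0" "(\<lambda>x y z. Lb * f x y z - b x y z) \<in> P34" "b \<in> P34"
      using b unfolding G_def by blast
    have abH: "(\<lambda>x y z. a x y z + b x y z) \<in> H 4"
      using H_lin[OF PH[OF La(3)] PH[OF Lb(3)], of 1 1] by simp
    have "(\<lambda>x y z. 1 * (\<lambda>x y z. a x y z + b x y z) x y z - (\<lambda>x y z. 0) x y z) \<in> P34"
      apply (rule P34_diff[OF abH])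
      using H_diff[OF abH abH, of 1] apply simp
      using Pnn[OF La(3)] Pnn[OF Lb(3)] by (simp add: add_nonneg_nonneg)
    then have abP: "(\<lambda>x y z. a x y z + b x y z) \<in> P34" by simp
    have "(\<lambda>x y z. (La + Lb) * f x y z - (\<lambda>x y z. a x y z + b x y z) x y z) \<in> P34"
      apply (rule P34_diff[OF fH abH])
      using Pnn[OF La(2)] Pnn[OF Lb(2)] by (simp add: algebra_simps add_mono)
    then show "(\<lambda>x y z. a x y z + b x y z) \<in> G" unfolding G_def using abP La Lb
      by (auto intro!: exI[of _ "La + Lb"])
  next
    fix t :: real and a assume t: "0 \<le> t" and a: "a \<in> G"
    obtain La where La: "La \<ge> 0" "(\<lambda>x y z. La * f x y z - a x y z) \<in> P34" "a \<in> P34"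
      using a unfolding G_def by blast
    have tH: "(\<lambda>x y z. t * a x y z) \<in> H 4"
      using H_lin[OF PH[OF La(3)] PH[OF La(3)], of t 0] by simp
    have "(\<lambda>x y z. t * a x y z - (\<lambda>x y z. 0) x y z) \<in> P34"
      apply (rule P34_diff[OF PH[OF La(3)]])
      using H_diff[OF PH[OF La(3)] PH[OF La(3)], of 1] apply simp
      using Pnn[OF La(3)] t by simp
    then have tP: "(\<lambda>x y z. t * a x y z) \<in> P34" by simp
    have "(\<lambda>x y z. (t * La) * f x y z - (\<lambda>x y z. t * a x y z) x y z) \<in> P34"
    proof (rule P34_diff[OF fH tH], intro allI)
      fix x y z
      have e: "t * La * f x y z - t * a x y z = t * (La * f x y z - a x y z)" by (simp add: algebra_simps)
      have "0 \<le> La * f x y z - a x y z" using Pnn[OF La(2), of x y z] by simp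
      then show "0 \<le> t * La * f x y z - t * a x y z" unfolding e using t by simp
    qed
    then show "(\<lambda>x y z. t * a x y z) \<in> G" unfolding G_def using tP La t
      by (auto intro!: exI[of _ "t * La"])
  next
    fix a b assume a: "a \<in> P34" and b: "b \<in> P34" and ab: "(\<lambda>x y z. a x y z + b x y z) \<in> G"
    show "a \<in> G" using Gext[OF a b ab] by blast
  next
    fix a b assume a: "a \<in> P34" and b: "b \<in> P34" and ab: "(\<lambda>x y z. a x y z + b x y z) \<in> G"
    show "b \<in> G" using Gext[OF a b ab] by blast
  qed
  have GF: "G \<subseteq> F"
  proof
    fix g assume g: "g \<in> G"
    obtain L where L: "L \<ge> 0" "(\<lambda>x y z. L * f x y z - g x y z) \<in> P34" "g \<in> P34"
      using g unfolding G_def by blast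
    have "(\<lambda>x y z. L * f x y z) \<in> F" using face_scale[OF face, rule_format, OF L(1) fF] .
    moreover have "(\<lambda>x y z. (\<lambda>x y z. L * f x y z - g x y z) x y z + g x y z) = (\<lambda>x y z. L * f x y z)"
      by simp
    ultimately have "(\<lambda>x y z. (\<lambda>x y z. L * f x y z - g x y z) x y z + g x y z) \<in> F" by simp
    then show "g \<in> F" using face_ext[OF face, rule_format, OF L(2) L(3)] by blast
  qed
  have gbound: "\<exists>L\<ge>0. \<forall>x y z. g x y z \<le> L * f x y z" if gG: "g \<in> G" for g
  proof -
    obtain L where L: "L \<ge> 0" "(\<lambda>x y z. L * f x y z - g x y z) \<in> P34"
      using gG unfolding G_def by blast
    show ?thesis using L Pnn[OF L(2)] by (auto intro!: exI[of _ L])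
  qed
  have hG: "(\<lambda>x y z. (h x y z)^2) \<notin> G"
  proof
    assume "(\<lambda>x y z. (h x y z)^2) \<in> G"
    from gbound[OF this] obtain L where "L \<ge> 0" "\<forall>x y z. (h x y z)^2 \<le> L * f x y z" by auto
    then show False using nobound by blast
  qed
  have hF2: "(\<lambda>x y z. (h x y z)^2) \<in> F" using hF unfolding JF_def by blast
  have GsF: "G \<subset> F" using GF hG hF2 by blast
  have "J = JF G"
  proof
    show "J \<subseteq> JF G"
    proof
      fix q assume q: "q \<in> J"
      then have qH: "q \<in> H 2" and q2F: "(\<lambda>x y z. (q x y z)^2) \<in> F" using JJ unfolding JF_def by auto
      have q2P: "(\<lambda>x y z. (q x y z)^2) \<in> P34" using q2F FP by blast
      obtain L where L: "L \<ge> 0" "\<forall>x y z. (q x y z)^2 \<le> L * f x y z" using bound[OF q] by blast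
      have "(\<lambda>x y z. L * f x y z - (\<lambda>x y z. (q x y z)^2) x y z) \<in> P34"
        apply (rule P34_diff[OF fH PH[OF q2P]]) using L(2) by simp
      then have "(\<lambda>x y z. (q x y z)^2) \<in> G" unfolding G_def using q2P L(1) by auto
      then show "q \<in> JF G" using qH unfolding JF_def by blast
    qed
  next
    show "JF G \<subseteq> J"
    proof
      fix g assume g: "g \<in> JF G"
      show "g \<in> J"
      proof (rule ccontr)
        assume gJ: "g \<notin> J"
        have gF: "g \<in> JF F" using g GF unfolding JF_def by blast
        obtain g0 where g0: "JF F = {(\<lambda>x y z. j x y z + t * g0 x y z) | j t. j \<in> J}"
          using assms(2) unfolding codim1_in_def by blast
        obtain j' t' where j': "j' \<in> J" "g = (\<lambda>x y z. j' x y z + t' * g0 x y z)"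
          using gF g0 by blast
        obtain j t where j: "j \<in> J" "h = (\<lambda>x y z. j x y z + t * g0 x y z)"
          using hF g0 by blast
        have t': "t' \<noteq> 0"
        proof
          assume "t' = 0" then have "g = j'" using j' by auto
          then show False using gJ j' by simp
        qed
        define s where "s = t / t'"
        have hexp: "h x y z = j x y z + s * g x y z + (- s) * j' x y z" for x y z
          using t' unfolding j j' s_def by (simp add: field_simps)
        obtain L1 where L1: "L1 \<ge> 0" "\<forall>x y z. (j x y z)^2 \<le> L1 * f x y z" using bound[OF j(1)] by blast
        obtain L2 where L2: "L2 \<ge> 0" "\<forall>x y z. (j' x y z)^2 \<le> L2 * f x y z" using bound[OF j'(1)] by blast
        have g2G: "(\<lambda>x y z. (g x y z)^2) \<in> G" using g unfolding JF_def by blast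
        obtain L3 where L3: "L3 \<ge> 0" "\<forall>x y z. (g x y z)^2 \<le> L3 * f x y z"
          using gbound[OF g2G] by auto
        define L where "L = 3 * (L1 + s^2 * L3 + s^2 * L2)"
        have "L \<ge> 0" unfolding L_def using L1 L2 L3 by simp
        moreover have "\<forall>x y z. (h x y z)^2 \<le> L * f x y z"
        proof (intro allI)
          fix x y z
          have "(h x y z)^2 \<le> 3 * ((j x y z)^2 + (s * g x y z)^2 + ((-s) * j' x y z)^2)"
            unfolding hexp by (rule sq3)
          also have "\<dots> = 3 * ((j x y z)^2 + s^2 * (g x y z)^2 + s^2 * (j' x y z)^2)"
            by (simp add: power_mult_distrib)
          also have "\<dots> \<le> 3 * (L1 * f x y z + s^2 * (L3 * f x y z) + s^2 * (L2 * f x y z))"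
            using L1(2) L2(2) L3(2) by (intro mult_left_mono add_mono) auto
          also have "\<dots> = L * f x y z" unfolding L_def by (simp add: algebra_simps)
          finally show "(h x y z)^2 \<le> L * f x y z" .
        qed
        ultimately show False using nobound by blast
      qed
    qed
  qed
  then show ?thesis using Gface GsF by blast
qed

end
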